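(* Let $\pi$ be a probability density and $q$ a positive probability density (with respect to a common reference measure $\mathrm{d}x$) on a space $\mathsf{E}$, and let $w(x):=\pi(x)/q(x)$. Let $P$ be the Independent Metropolis–Hastings kernel \[ P(x,\mathrm{d}y)=\Big[1\wedge\frac{w(y)}{w(x)}\Big]q(y)\,\mathrm{d}y+\rho(x)\delta_{x}(\mathrm{d}y),\qquad\rho(x)=\int\Big[1-1\wedge\frac{w(y)}{w(x)}\Big]q(y)\,\mathrm{d}y, \] and for $s>0$ let $A(s):=\{(x,y)\in\mathsf{E}\times\mathsf{E}:w^{-1}(x)\wedge w^{-1}(y)\ge1/s\}$. Then for every $f\in\mathrm{L}_{0}^{2}(\pi)$ and every $s>0$, \[ \|f\|_{2}^{2}\le s\,\mathcal{E}(P,f)+\frac{\pi\otimes\pi(A(s)^{\complement})}{2}\|f\|_{\mathrm{osc}}^{2}. \]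
   Context: $\|\cdot\|_{2}$ and $\mathrm{L}_{0}^{2}(\pi)$ refer to the probability measure $\pi(x)\mathrm{d}x$; $\mathcal{E}(P,f)=\langle(\mathrm{Id}-P)f,f\rangle_{\mathrm{L}^{2}(\pi)}$; $\|f\|_{\mathrm{osc}}=\operatorname{ess\,sup}f-\operatorname{ess\,inf}f$; $\pi\otimes\pi$ is the product measure on $\mathsf{E}\times\mathsf{E}$. *)

theory Defs
  imports "HOL-Probability.Probability"
begin

definition essinf :: "'a measure \<Rightarrow> ('a \<Rightarrow> ereal) \<Rightarrow> ereal" where
  "essinf M f = - esssup M (\<lambda>x. - f x)"

definition osc_norm :: "'a measure \<Rightarrow> ('a \<Rightarrow> real) \<Rightarrow> ereal" where
  "osc_norm M f = esssup M (\<lambda>x. ereal (f x)) - essinf M (\<lambda>x. ereal (f x))"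

definition imp_weight :: "('a \<Rightarrow> real) \<Rightarrow> ('a \<Rightarrow> real) \<Rightarrow> 'a \<Rightarrow> real" where
  "imp_weight \<pi> q x = \<pi> x / q x"

definition imh_rho :: "'a measure \<Rightarrow> ('a \<Rightarrow> real) \<Rightarrow> ('a \<Rightarrow> real) \<Rightarrow> 'a \<Rightarrow> real" where
  "imh_rho M \<pi> q x =
     (\<integral>y. (1 - min 1 (imp_weight \<pi> q y / imp_weight \<pi> q x)) * q y \<partial>M)"

text \<open>The IMH Markov operator: (P f)(x) = int f(y) P(x,dy).\<close>
definition imh_op :: "'a measure \<Rightarrow> ('a \<Rightarrow> real) \<Rightarrow> ('a \<Rightarrow> real) \<Rightarrow> ('a \<Rightarrow> real) \<Rightarrow> 'a \<Rightarrow> real" where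
  "imh_op M \<pi> q f x =
     (\<integral>y. min 1 (imp_weight \<pi> q y / imp_weight \<pi> q x) * q y * f y \<partial>M)
     + imh_rho M \<pi> q x * f x"

definition pi_measure :: "'a measure \<Rightarrow> ('a \<Rightarrow> real) \<Rightarrow> 'a measure" where
  "pi_measure M \<pi> = density M (\<lambda>x. ennreal (\<pi> x))"

definition imh_dirichlet :: "'a measure \<Rightarrow> ('a \<Rightarrow> real) \<Rightarrow> ('a \<Rightarrow> real) \<Rightarrow> ('a \<Rightarrow> real) \<Rightarrow> real" where
  "imh_dirichlet M \<pi> q f =
     (\<integral>x. (f x - imh_op M \<pi> q f x) * f x \<partial>pi_measure M \<pi>)"

text \<open>A(s) = {(x,y) : w^{-1}(x) min w^{-1}(y) >= 1/s}, with 1/0 = infinity.\<close>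
definition A_set :: "'a measure \<Rightarrow> ('a \<Rightarrow> real) \<Rightarrow> ('a \<Rightarrow> real) \<Rightarrow> real \<Rightarrow> ('a \<times> 'a) set" where
  "A_set M \<pi> q s = {(x, y) \<in> space M \<times> space M.
      min (inverse (ereal (imp_weight \<pi> q x))) (inverse (ereal (imp_weight \<pi> q y))) \<ge> ereal (1 / s)}"

end

theory Submission
  imports Defs
begin


lemma integrable_pair_fst:
  fixes h :: "'a \<Rightarrow> real"
  assumes "prob_space M1" "prob_space M2" "integrable M1 h"
  shows "integrable (M1 \<Otimes>\<^sub>M M2) (\<lambda>z. h (fst z))"
proof -
  interpret P: pair_prob_space M1 M2 using assms by (simp add: pair_prob_space_def pair_sigma_finite_def prob_space_imp_sigma_finite)
  have hm[measurable]: "h \<in> borel_measurable M1" using assms(3) by auto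
  have "(\<integral>\<^sup>+ z. ennreal (norm (h (fst z))) \<partial>(M1 \<Otimes>\<^sub>M M2)) = (\<integral>\<^sup>+ x. \<integral>\<^sup>+ y. ennreal (norm (h x)) \<partial>M2 \<partial>M1)"
    by (subst P.M2.nn_integral_fst[symmetric]) auto
  also have "\<dots> = (\<integral>\<^sup>+ x. ennreal (norm (h x)) \<partial>M1)"
    by (simp add: P.M2.emeasure_space_1)
  also have "\<dots> < \<infinity>" using assms(3) by (simp add: integrable_iff_bounded)
  finally show ?thesis by (intro integrableI_bounded) auto
qed

lemma integrable_pair_snd:
  fixes h :: "'a \<Rightarrow> real"
  assumes "prob_space M1" "prob_space M2" "integrable M2 h"
  shows "integrable (M1 \<Otimes>\<^sub>M M2) (\<lambda>z. h (snd z))"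
proof -
  interpret P: pair_prob_space M1 M2 using assms by (simp add: pair_prob_space_def pair_sigma_finite_def prob_space_imp_sigma_finite)
  have hm[measurable]: "h \<in> borel_measurable M2" using assms(3) by auto
  have "(\<integral>\<^sup>+ z. ennreal (norm (h (snd z))) \<partial>(M1 \<Otimes>\<^sub>M M2)) = (\<integral>\<^sup>+ x. \<integral>\<^sup>+ y. ennreal (norm (h y)) \<partial>M2 \<partial>M1)"
    by (subst P.M2.nn_integral_fst[symmetric]) auto
  also have "\<dots> = (\<integral>\<^sup>+ y. ennreal (norm (h y)) \<partial>M2)"
    by (simp add: P.M1.emeasure_space_1)
  also have "\<dots> < \<infinity>" using assms(3) by (simp add: integrable_iff_bounded)
  finally show ?thesis by (intro integrableI_bounded) auto
qed

lemma A_set_eq: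
  assumes "\<And>x. x \<in> space M \<Longrightarrow> 0 \<le> imp_weight \<pi> q x" "0 < s"
  shows "A_set M \<pi> q s = {(x, y) \<in> space M \<times> space M. imp_weight \<pi> q x \<le> s \<and> imp_weight \<pi> q y \<le> s}"
proof -
  have *: "(ereal (1/s) \<le> inverse (ereal a)) = (a \<le> s)" if "0 \<le> a" for a
    using that assms(2) by (cases "a = 0") (auto simp: field_simps)
  have **: "(ereal (1/s) \<le> min (inverse (ereal (imp_weight \<pi> q x))) (inverse (ereal (imp_weight \<pi> q y))))
      = (imp_weight \<pi> q x \<le> s \<and> imp_weight \<pi> q y \<le> s)" if "x \<in> space M" "y \<in> space M" for x y
    unfolding min.bounded_iff using *[OF assms(1)[OF that(1)]] *[OF assms(1)[OF that(2)]] by simp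
  show ?thesis unfolding A_set_def using ** by (fastforce simp del: inverse_ereal.simps min.bounded_iff)
qed



theorem proposition25:
  fixes M :: "'a measure" and \<pi> q f :: "'a \<Rightarrow> real" and s :: real
  assumes \<pi>_meas: "\<pi> \<in> borel_measurable M"
    and \<pi>_nonneg: "\<And>x. x \<in> space M \<Longrightarrow> 0 \<le> \<pi> x"
    and \<pi>_prob: "(\<integral>\<^sup>+ x. ennreal (\<pi> x) \<partial>M) = 1"
    and q_meas: "q \<in> borel_measurable M"
    and q_pos: "\<And>x. x \<in> space M \<Longrightarrow> 0 < q x"
    and q_prob: "(\<integral>\<^sup>+ x. ennreal (q x) \<partial>M) = 1"
    and f_meas: "f \<in> borel_measurable M"
    and f_L2: "integrable (pi_measure M \<pi>) (\<lambda>x. (f x)\<^sup>2)"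
    and f_mean0: "(\<integral>x. f x \<partial>pi_measure M \<pi>) = 0"
    and s_pos: "0 < s"
  shows "ereal (\<integral>x. (f x)\<^sup>2 \<partial>pi_measure M \<pi>)
           \<le> ereal (s * imh_dirichlet M \<pi> q f)
             + ereal (measure (pi_measure M \<pi> \<Otimes>\<^sub>M pi_measure M \<pi>)
                        (space M \<times> space M - A_set M \<pi> q s) / 2)
               * (osc_norm (pi_measure M \<pi>) f)\<^sup>2"
proof -
  define w where "w = imp_weight \<pi> q"
  define Q where "Q = density M (\<lambda>x. ennreal (q x))"
  define Pi where "Pi = pi_measure M \<pi>"
  define m where "m = (\<lambda>x y. min (w x) (w y))"
  note [measurable] = \<pi>_meas q_meas f_meas
  have iw_meas[measurable]: "imp_weight \<pi> q \<in> borel_measurable M" unfolding imp_weight_def by measurable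
  have w_meas[measurable]: "w \<in> borel_measurable M" unfolding w_def imp_weight_def by measurable
  have w_nn: "0 \<le> w x" if "x \<in> space M" for x
    unfolding w_def imp_weight_def using \<pi>_nonneg[OF that] q_pos[OF that] by simp
  have pi_eq: "\<pi> x = q x * w x" if "x \<in> space M" for x
    unfolding w_def imp_weight_def using q_pos[OF that] by simp
  have sQ: "sets Q = sets M" and spQ: "space Q = space M" unfolding Q_def by auto
  have sPi: "sets Pi = sets M" and spPi: "space Pi = space M" unfolding Pi_def pi_measure_def by auto
  have [measurable]: "w \<in> borel_measurable Q" "f \<in> borel_measurable Q" 
    unfolding measurable_cong_sets[OF sQ refl] by auto
  have [measurable]: "w \<in> borel_measurable Pi" "f \<in> borel_measurable Pi" 
    unfolding measurable_cong_sets[OF sPi refl] by auto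
  have probQ: "prob_space Q"
  proof
    have "emeasure Q (space Q) = (\<integral>\<^sup>+ x. ennreal (q x) * indicator (space M) x \<partial>M)"
      unfolding Q_def by (simp add: emeasure_density)
    also have "\<dots> = 1" using q_prob by (subst nn_integral_cong[where v="\<lambda>x. ennreal (q x)"]) auto
    finally show "emeasure Q (space Q) = 1" .
  qed
  have probPi: "prob_space Pi"
  proof
    have "emeasure Pi (space Pi) = (\<integral>\<^sup>+ x. ennreal (\<pi> x) * indicator (space M) x \<partial>M)"
      unfolding Pi_def pi_measure_def by (simp add: emeasure_density)
    also have "\<dots> = 1" using \<pi>_prob by (subst nn_integral_cong[where v="\<lambda>x. ennreal (\<pi> x)"]) auto
    finally show "emeasure Pi (space Pi) = 1" .
  qed
  interpret Q: prob_space Q by (fact probQ)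
  interpret Pi: prob_space Pi by (fact probPi)
  interpret QQ: pair_prob_space Q Q by unfold_locales
  interpret PP: pair_prob_space Pi Pi by unfold_locales
  have Pi_eq: "Pi = density Q (\<lambda>x. ennreal (w x))"
  proof -
    have "density Q (\<lambda>x. ennreal (w x)) = density M (\<lambda>x. ennreal (q x) * ennreal (w x))"
      unfolding Q_def by (rule density_density_eq) auto
    also have "\<dots> = density M (\<lambda>x. ennreal (\<pi> x))"
      by (rule density_cong) (auto simp: pi_eq ennreal_mult' q_pos less_imp_le w_nn)
    finally show ?thesis unfolding Pi_def pi_measure_def by simp
  qed
  have w_nnQ: "AE x in Q. 0 \<le> w x" using w_nn spQ by auto
  have intPi: "integrable Pi h \<longleftrightarrow> integrable Q (\<lambda>x. w x * h x)" if [measurable]: "h \<in> borel_measurable Q" for h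
    unfolding Pi_eq using integrable_density[of h Q w] w_nnQ by simp
  have integPi: "integral\<^sup>L Pi h = (\<integral>x. w x * h x \<partial>Q)" if [measurable]: "h \<in> borel_measurable Q" for h
    unfolding Pi_eq using integral_density[of h Q w] w_nnQ by simp
  have fL2: "integrable Pi (\<lambda>x. (f x)\<^sup>2)" using f_L2 Pi_def by simp
  have fL1: "integrable Pi f" by (rule Pi.square_integrable_imp_integrable) (auto simp: fL2)
  have wf2: "integrable Q (\<lambda>x. w x * (f x)\<^sup>2)" using intPi fL2 by simp
  have wf1: "integrable Q (\<lambda>x. w x * f x)" using intPi fL1 by simp
  have w1: "integrable Q w" using intPi[of "\<lambda>_. 1"] by simp
  define k where "k = (\<lambda>x y. min 1 (w y / w x))"
  have wk: "w x * k x y = m x y" if "x \<in> space M" "y \<in> space M" for x y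
  proof (cases "w x = 0")
    case True then show ?thesis using w_nn[OF that(2)] by (simp add: k_def m_def)
  next
    case False
    then have "w x > 0" using w_nn[OF that(1)] by simp
    then show ?thesis unfolding k_def m_def
      by (simp add: min_def field_simps)
  qed
  have k_meas[measurable]: "(\<lambda>(x,y). k x y) \<in> borel_measurable (Q \<Otimes>\<^sub>M Q)" unfolding k_def by measurable
  have m_meas[measurable]: "(\<lambda>(x,y). m x y) \<in> borel_measurable (Q \<Otimes>\<^sub>M Q)" unfolding m_def by measurable
  have k_bd: "0 \<le> k x y \<and> k x y \<le> 1" if "x \<in> space M" "y \<in> space M" for x y
    using w_nn[OF that(1)] w_nn[OF that(2)] unfolding k_def by auto
  have m_bd: "0 \<le> m x y \<and> m x y \<le> w y \<and> m x y \<le> w x" if "x \<in> space M" "y \<in> space M" for x y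
    using w_nn[OF that(1)] w_nn[OF that(2)] unfolding m_def by auto
  have intk: "integrable Q (k x)" if "x \<in> space M" for x
    by (rule Q.integrable_const_bound[where B=1]) (use k_bd that spQ in auto)
  have intm: "integrable Q (m x)" if "x \<in> space M" for x
    by (rule Bochner_Integration.integrable_bound[OF w1]) (use m_bd that spQ in \<open>auto intro!: AE_I2 order_trans[OF _ abs_ge_self]\<close>)
  have intmf: "integrable Q (\<lambda>y. m x y * f y)" if "x \<in> space M" for x
  proof (rule Bochner_Integration.integrable_bound[OF wf1])
    have "\<bar>m x y * f y\<bar> \<le> \<bar>w y * f y\<bar>" if "y \<in> space M" for y
      unfolding abs_mult using m_bd[OF \<open>x \<in> space M\<close> that] by (intro mult_right_mono) auto
    then show "AE y in Q. norm (m x y * f y) \<le> norm (w y * f y)" using spQ by auto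
  qed (unfold m_def, measurable)
  have op_eq: "imh_op M \<pi> q f x = (\<integral>y. k x y * f y \<partial>Q) + (1 - (\<integral>y. k x y \<partial>Q)) * f x"
    if x: "x \<in> space M" for x
  proof -
    have 1: "(\<integral>y. min 1 (imp_weight \<pi> q y / imp_weight \<pi> q x) * q y * f y \<partial>M) = (\<integral>y. k x y * f y \<partial>Q)"
      unfolding Q_def
      by (subst integral_density) (auto simp: k_def w_def q_pos less_imp_le ac_simps intro!: integral_cong)
    have 2: "imh_rho M \<pi> q x = (\<integral>y. 1 - k x y \<partial>Q)"
      unfolding Q_def imh_rho_def
      by (subst integral_density) (auto simp: k_def w_def q_pos less_imp_le ac_simps intro!: integral_cong)
    have 3: "(\<integral>y. 1 - k x y \<partial>Q) = 1 - (\<integral>y. k x y \<partial>Q)"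
      using intk[OF x] by (subst Bochner_Integration.integral_diff) (auto simp: Q.prob_space)
    show ?thesis unfolding imh_op_def 1 2 3 ..
  qed
  have E_pt: "w x * ((f x - imh_op M \<pi> q f x) * f x) = (\<integral>y. m x y * f x * (f x - f y) \<partial>Q)"
    if x: "x \<in> space M" for x
  proof -
    have a: "w x * (\<integral>y. k x y * f y \<partial>Q) = (\<integral>y. m x y * f y \<partial>Q)"
      unfolding integral_mult_right_zero[symmetric]
      by (rule Bochner_Integration.integral_cong) (auto simp: spQ wk[OF x, symmetric] mult.assoc)
    have b: "w x * (\<integral>y. k x y \<partial>Q) = (\<integral>y. m x y \<partial>Q)"
      unfolding integral_mult_right_zero[symmetric]
      by (rule Bochner_Integration.integral_cong) (auto simp: spQ wk[OF x, symmetric])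
    have c: "(\<integral>y. m x y * f x * (f x - f y) \<partial>Q) = f x * f x * (\<integral>y. m x y \<partial>Q) - f x * (\<integral>y. m x y * f y \<partial>Q)"
    proof -
      have "(\<integral>y. m x y * f x * (f x - f y) \<partial>Q) = (\<integral>y. f x * f x * m x y - f x * (m x y * f y) \<partial>Q)"
        by (rule Bochner_Integration.integral_cong) (auto simp: algebra_simps)
      also have "\<dots> = (\<integral>y. f x * f x * m x y \<partial>Q) - (\<integral>y. f x * (m x y * f y) \<partial>Q)"
        using intm[OF x] intmf[OF x] by (intro Bochner_Integration.integral_diff) auto
      also have "\<dots> = f x * f x * (\<integral>y. m x y \<partial>Q) - f x * (\<integral>y. m x y * f y \<partial>Q)"
        by simp
      finally show ?thesis .
    qed
    have d: "w x * ((f x - ((\<integral>y. k x y * f y \<partial>Q) + (1 - (\<integral>y. k x y \<partial>Q)) * f x)) * f x)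
       = f x * f x * (w x * (\<integral>y. k x y \<partial>Q)) - f x * (w x * (\<integral>y. k x y * f y \<partial>Q))"
      by algebra
    show ?thesis unfolding op_eq[OF x] c d a b ..
  qed
  have h_meas: "(\<lambda>x. (f x - imh_op M \<pi> q f x) * f x) \<in> borel_measurable Q"
  proof -
    have "(\<lambda>x. (f x - ((\<integral>y. k x y * f y \<partial>Q) + (1 - (\<integral>y. k x y \<partial>Q)) * f x)) * f x) \<in> borel_measurable Q"
      by measurable
    then show ?thesis by (rule measurable_cong[THEN iffD1, rotated]) (simp add: spQ op_eq)
  qed
  define F where "F = (\<lambda>z. m (fst z) (snd z) * f (fst z) * (f (fst z) - f (snd z)))"
  have F_meas[measurable]: "F \<in> borel_measurable (Q \<Otimes>\<^sub>M Q)" unfolding F_def m_def by measurable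
  have F_bd: "\<bar>F (x,y)\<bar> \<le> 2 * (w x * (f x)\<^sup>2) + w y * (f y)\<^sup>2" if "x \<in> space M" "y \<in> space M" for x y
  proof -
    have mb: "0 \<le> m x y" "m x y \<le> w x" "m x y \<le> w y" using m_bd[OF that] by auto
    have ab: "\<bar>f x * (f x - f y)\<bar> \<le> 2 * (f x)\<^sup>2 + (f y)\<^sup>2"
    proof -
      have "2 * (\<bar>f x\<bar> * \<bar>f x - f y\<bar>) \<le> (f x)\<^sup>2 + (f x - f y)\<^sup>2"
        using sum_squares_bound[of "\<bar>f x\<bar>" "\<bar>f x - f y\<bar>"] by (simp add: power2_abs mult.assoc)
      moreover have "(f x - f y)\<^sup>2 \<le> 2 * (f x)\<^sup>2 + 2 * (f y)\<^sup>2"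
        using zero_le_power2[of "f x + f y"] by (simp add: power2_eq_square algebra_simps)
      ultimately show ?thesis unfolding abs_mult using zero_le_power2[of "f x"] by linarith
    qed
    have "\<bar>F (x,y)\<bar> = m x y * \<bar>f x * (f x - f y)\<bar>" unfolding F_def using mb by (simp add: abs_mult)
    also have "\<dots> \<le> m x y * (2 * (f x)\<^sup>2 + (f y)\<^sup>2)" using mb ab by (intro mult_left_mono) auto
    also have "\<dots> = 2 * (m x y * (f x)\<^sup>2) + m x y * (f y)\<^sup>2" by (simp add: algebra_simps)
    also have "\<dots> \<le> 2 * (w x * (f x)\<^sup>2) + w y * (f y)\<^sup>2"
      using mb by (intro add_mono mult_left_mono mult_right_mono) auto
    finally show ?thesis .
  qed
  have intB: "integrable (Q \<Otimes>\<^sub>M Q) (\<lambda>z. 2 * (w (fst z) * (f (fst z))\<^sup>2) + w (snd z) * (f (snd z))\<^sup>2)"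
    using integrable_pair_fst[OF probQ probQ wf2] integrable_pair_snd[OF probQ probQ wf2] by auto
  have intF: "integrable (Q \<Otimes>\<^sub>M Q) F"
  proof (rule Bochner_Integration.integrable_bound[OF intB F_meas])
    show "AE z in Q \<Otimes>\<^sub>M Q. norm (F z) \<le> norm (2 * (w (fst z) * (f (fst z))\<^sup>2) + w (snd z) * (f (snd z))\<^sup>2)"
    proof (rule AE_I2)
      fix z assume "z \<in> space (Q \<Otimes>\<^sub>M Q)"
      then obtain x y where z: "z = (x,y)" "x \<in> space M" "y \<in> space M" by (auto simp: space_pair_measure spQ)
      show "norm (F z) \<le> norm (2 * (w (fst z) * (f (fst z))\<^sup>2) + w (snd z) * (f (snd z))\<^sup>2)"
        using F_bd[OF z(2,3)] w_nn[OF z(2)] w_nn[OF z(3)] z(1) by simp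
    qed
  qed
  have E_F: "imh_dirichlet M \<pi> q f = integral\<^sup>L (Q \<Otimes>\<^sub>M Q) F"
  proof -
    have "imh_dirichlet M \<pi> q f = (\<integral>x. w x * ((f x - imh_op M \<pi> q f x) * f x) \<partial>Q)"
      unfolding imh_dirichlet_def Pi_def[symmetric] by (rule integPi[OF h_meas])
    also have "\<dots> = (\<integral>x. \<integral>y. F (x,y) \<partial>Q \<partial>Q)"
      by (rule Bochner_Integration.integral_cong) (auto simp: spQ E_pt F_def)
    also have "\<dots> = integral\<^sup>L (Q \<Otimes>\<^sub>M Q) F" by (rule QQ.integral_fst'[OF intF])
    finally show ?thesis .
  qed
  define G where "G = (\<lambda>z. m (fst z) (snd z) * (f (fst z) - f (snd z))\<^sup>2)"
  have intFs: "integrable (Q \<Otimes>\<^sub>M Q) (\<lambda>(x,y). F (y,x))" by (rule QQ.integrable_product_swap[OF intF])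
  have G_eq: "G z = F z + (\<lambda>(x,y). F (y,x)) z" for z
    unfolding G_def F_def m_def by (cases z) (simp add: min.commute power2_eq_square algebra_simps)
  have intG: "integrable (Q \<Otimes>\<^sub>M Q) G" unfolding G_eq using intF intFs by simp
  have E_G: "2 * imh_dirichlet M \<pi> q f = integral\<^sup>L (Q \<Otimes>\<^sub>M Q) G"
  proof -
    have "integral\<^sup>L (Q \<Otimes>\<^sub>M Q) G = integral\<^sup>L (Q \<Otimes>\<^sub>M Q) F + (\<integral>(x,y). F (y,x) \<partial>(Q \<Otimes>\<^sub>M Q))"
      unfolding G_eq using intF intFs by simp
    also have "(\<integral>(x,y). F (y,x) \<partial>(Q \<Otimes>\<^sub>M Q)) = integral\<^sup>L (Q \<Otimes>\<^sub>M Q) F"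
      by (rule QQ.integral_product_swap[OF F_meas])
    finally show ?thesis using E_F by simp
  qed
  define N where "N = (\<integral>x. (f x)\<^sup>2 \<partial>Pi)"
  define g where "g = (\<lambda>z. (f (fst z) - f (snd z))\<^sup>2)"
  have g_meas[measurable]: "g \<in> borel_measurable (Pi \<Otimes>\<^sub>M Pi)" unfolding g_def by measurable
  have intg: "integrable (Pi \<Otimes>\<^sub>M Pi) g"
  proof (rule Bochner_Integration.integrable_bound[OF _ g_meas])
    show "integrable (Pi \<Otimes>\<^sub>M Pi) (\<lambda>z. 2 * (f (fst z))\<^sup>2 + 2 * (f (snd z))\<^sup>2)"
      using integrable_pair_fst[OF probPi probPi fL2] integrable_pair_snd[OF probPi probPi fL2] by auto
    show "AE z in Pi \<Otimes>\<^sub>M Pi. norm (g z) \<le> norm (2 * (f (fst z))\<^sup>2 + 2 * (f (snd z))\<^sup>2)"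
    proof (rule AE_I2)
      fix z :: "'a \<times> 'a"
      have "(f (fst z) - f (snd z))\<^sup>2 \<le> 2 * (f (fst z))\<^sup>2 + 2 * (f (snd z))\<^sup>2"
        using zero_le_power2[of "f (fst z) + f (snd z)"] by (simp add: power2_eq_square algebra_simps)
      then show "norm (g z) \<le> norm (2 * (f (fst z))\<^sup>2 + 2 * (f (snd z))\<^sup>2)" unfolding g_def by simp
    qed
  qed
  have f0: "(\<integral>x. f x \<partial>Pi) = 0" using f_mean0 Pi_def by simp
  have g_int: "integral\<^sup>L (Pi \<Otimes>\<^sub>M Pi) g = 2 * N"
  proof -
    have inner: "(\<integral>y. (f x - f y)\<^sup>2 \<partial>Pi) = (f x)\<^sup>2 + N" for x
    proof -
      have "(\<integral>y. (f x - f y)\<^sup>2 \<partial>Pi) = (\<integral>y. ((f x)\<^sup>2 + (f y)\<^sup>2) - 2 * f x * f y \<partial>Pi)"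
        by (rule Bochner_Integration.integral_cong) (auto simp: power2_diff)
      also have "\<dots> = (\<integral>y. (f x)\<^sup>2 + (f y)\<^sup>2 \<partial>Pi) - (\<integral>y. 2 * f x * f y \<partial>Pi)"
        using fL1 fL2 by (intro Bochner_Integration.integral_diff) auto
      also have "(\<integral>y. (f x)\<^sup>2 + (f y)\<^sup>2 \<partial>Pi) = (f x)\<^sup>2 + N"
        using fL2 unfolding N_def by (subst Bochner_Integration.integral_add) (auto simp: Pi.prob_space)
      also have "(\<integral>y. 2 * f x * f y \<partial>Pi) = 0" using f0 by simp
      finally show ?thesis by simp
    qed
    have "integral\<^sup>L (Pi \<Otimes>\<^sub>M Pi) g = (\<integral>x. \<integral>y. g (x,y) \<partial>Pi \<partial>Pi)"
      by (rule PP.integral_fst'[OF intg, symmetric])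
    also have "\<dots> = (\<integral>x. (f x)\<^sup>2 + N \<partial>Pi)" unfolding g_def using inner by simp
    also have "\<dots> = 2 * N"
      using fL2 unfolding N_def by (subst Bochner_Integration.integral_add) (auto simp: Pi.prob_space)
    finally show ?thesis .
  qed
  define Wd where "Wd = (\<lambda>z. w (fst z) * w (snd z))"
  have Wd_meas[measurable]: "Wd \<in> borel_measurable (Q \<Otimes>\<^sub>M Q)" unfolding Wd_def by measurable
  have PP_eq: "Pi \<Otimes>\<^sub>M Pi = density (Q \<Otimes>\<^sub>M Q) (\<lambda>z. ennreal (Wd z))"
  proof -
    have "Pi \<Otimes>\<^sub>M Pi = density (Q \<Otimes>\<^sub>M Q) (\<lambda>(x,y). ennreal (w x) * ennreal (w y))"
      unfolding Pi_eq
      by (rule pair_measure_density) (auto simp: Pi_eq[symmetric] prob_space_imp_sigma_finite probQ probPi)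
    also have "\<dots> = density (Q \<Otimes>\<^sub>M Q) (\<lambda>z. ennreal (Wd z))"
      by (rule density_cong) (auto simp: Wd_def space_pair_measure spQ w_nn ennreal_mult)
    finally show ?thesis .
  qed
  have Wd_nn: "AE z in Q \<Otimes>\<^sub>M Q. 0 \<le> Wd z"
    by (rule AE_I2) (auto simp: Wd_def space_pair_measure spQ w_nn)
  have sPP: "sets (Pi \<Otimes>\<^sub>M Pi) = sets (Q \<Otimes>\<^sub>M Q)" unfolding PP_eq by simp
  have spPP: "space (Pi \<Otimes>\<^sub>M Pi) = space M \<times> space M" by (simp add: space_pair_measure spPi)
  have spQQ: "space (Q \<Otimes>\<^sub>M Q) = space M \<times> space M" by (simp add: space_pair_measure spQ)
  have intPP: "integrable (Pi \<Otimes>\<^sub>M Pi) h \<longleftrightarrow> integrable (Q \<Otimes>\<^sub>M Q) (\<lambda>z. Wd z * h z)"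
    if [measurable]: "h \<in> borel_measurable (Q \<Otimes>\<^sub>M Q)" for h
    unfolding PP_eq using integrable_density[of h "Q \<Otimes>\<^sub>M Q" Wd] Wd_nn by simp
  have integPP: "integral\<^sup>L (Pi \<Otimes>\<^sub>M Pi) h = (\<integral>z. Wd z * h z \<partial>(Q \<Otimes>\<^sub>M Q))"
    if [measurable]: "h \<in> borel_measurable (Q \<Otimes>\<^sub>M Q)" for h
    unfolding PP_eq using integral_density[of h "Q \<Otimes>\<^sub>M Q" Wd] Wd_nn by simp
  define A where "A = {z \<in> space M \<times> space M. w (fst z) \<le> s \<and> w (snd z) \<le> s}"
  define Ac where "Ac = space M \<times> space M - A"
  have A_QQ: "A \<in> sets (Q \<Otimes>\<^sub>M Q)"
  proof -
    have "{z \<in> space (Q \<Otimes>\<^sub>M Q). w (fst z) \<le> s \<and> w (snd z) \<le> s} \<in> sets (Q \<Otimes>\<^sub>M Q)" by measurable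
    then show ?thesis unfolding A_def spQQ .
  qed
  have Ac_QQ: "Ac \<in> sets (Q \<Otimes>\<^sub>M Q)" unfolding Ac_def using A_QQ spQQ
    by (metis sets.compl_sets)
  have A_PP: "A \<in> sets (Pi \<Otimes>\<^sub>M Pi)" and Ac_PP: "Ac \<in> sets (Pi \<Otimes>\<^sub>M Pi)" using A_QQ Ac_QQ sPP by auto
  have A_set_A: "A_set M \<pi> q s = A"
    unfolding A_def w_def using A_set_eq[of M \<pi> q s] w_nn s_pos unfolding w_def by auto
  define \<mu> where "\<mu> = measure (Pi \<Otimes>\<^sub>M Pi) Ac"
  have mu_eq: "measure (pi_measure M \<pi> \<Otimes>\<^sub>M pi_measure M \<pi>) (space M \<times> space M - A_set M \<pi> q s) = \<mu>"
    unfolding \<mu>_def Ac_def A_set_A Pi_def ..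
  have mu_nn: "0 \<le> \<mu>" unfolding \<mu>_def by simp
  define gA where "gA = (\<lambda>z. g z * indicator A z)"
  define gAc where "gAc = (\<lambda>z. g z * indicator Ac z)"
  have gA_meas[measurable]: "gA \<in> borel_measurable (Pi \<Otimes>\<^sub>M Pi)" unfolding gA_def using A_PP by measurable
  have gAc_meas[measurable]: "gAc \<in> borel_measurable (Pi \<Otimes>\<^sub>M Pi)" unfolding gAc_def using Ac_PP by measurable
  have intgA: "integrable (Pi \<Otimes>\<^sub>M Pi) gA"
    by (rule Bochner_Integration.integrable_bound[OF intg gA_meas]) (auto simp: gA_def g_def indicator_def intro!: AE_I2)
  have intgAc: "integrable (Pi \<Otimes>\<^sub>M Pi) gAc"
    by (rule Bochner_Integration.integrable_bound[OF intg gAc_meas]) (auto simp: gAc_def g_def indicator_def intro!: AE_I2)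
  have gsplit: "2 * N = integral\<^sup>L (Pi \<Otimes>\<^sub>M Pi) gA + integral\<^sup>L (Pi \<Otimes>\<^sub>M Pi) gAc"
  proof -
    have "integral\<^sup>L (Pi \<Otimes>\<^sub>M Pi) g = (\<integral>z. gA z + gAc z \<partial>(Pi \<Otimes>\<^sub>M Pi))"
      by (rule Bochner_Integration.integral_cong) (auto simp: spPP gA_def gAc_def Ac_def indicator_def)
    also have "\<dots> = integral\<^sup>L (Pi \<Otimes>\<^sub>M Pi) gA + integral\<^sup>L (Pi \<Otimes>\<^sub>M Pi) gAc"
      using intgA intgAc by simp
    finally show ?thesis using g_int by simp
  qed
  have gA_QQ[measurable]: "gA \<in> borel_measurable (Q \<Otimes>\<^sub>M Q)" using gA_meas unfolding measurable_cong_sets[OF sPP refl] .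
  have G_meas[measurable]: "G \<in> borel_measurable (Q \<Otimes>\<^sub>M Q)" unfolding G_def m_def by measurable
  have partA: "integral\<^sup>L (Pi \<Otimes>\<^sub>M Pi) gA \<le> s * (2 * imh_dirichlet M \<pi> q f)"
  proof -
    have "integral\<^sup>L (Pi \<Otimes>\<^sub>M Pi) gA = (\<integral>z. Wd z * gA z \<partial>(Q \<Otimes>\<^sub>M Q))" by (rule integPP) simp
    also have "\<dots> \<le> (\<integral>z. s * G z \<partial>(Q \<Otimes>\<^sub>M Q))"
    proof (rule integral_mono)
      show "integrable (Q \<Otimes>\<^sub>M Q) (\<lambda>z. Wd z * gA z)" using intgA intPP[of gA] by simp
      show "integrable (Q \<Otimes>\<^sub>M Q) (\<lambda>z. s * G z)" using intG by simp
      fix z assume "z \<in> space (Q \<Otimes>\<^sub>M Q)"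
      then obtain x y where z: "z = (x,y)" "x \<in> space M" "y \<in> space M" by (auto simp: spQQ)
      have wx: "0 \<le> w x" and wy: "0 \<le> w y" using w_nn z by auto
      have gn: "0 \<le> g z" unfolding g_def by simp
      show "Wd z * gA z \<le> s * G z"
      proof (cases "z \<in> A")
        case True
        then have "w x \<le> s" "w y \<le> s" unfolding A_def z by auto
        then have "w x * w y \<le> w x * s" "w x * w y \<le> s * w y"
          using wx wy by (auto intro: mult_right_mono mult_left_mono)
        then have "w x * w y \<le> s * min (w x) (w y)" by (simp add: min_def mult.commute)
        then have "w x * w y * g z \<le> s * min (w x) (w y) * g z" using gn by (rule mult_right_mono)
        then show ?thesis using True unfolding Wd_def gA_def G_def m_def z g_def by simp
      next
        case False
        have "0 \<le> s * G z" unfolding G_def m_def z using wx wy s_pos by simp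
        then show ?thesis using False unfolding gA_def by simp
      qed
    qed
    also have "\<dots> = s * (2 * imh_dirichlet M \<pi> q f)" using E_G by simp
    finally show ?thesis .
  qed
  define T where "T = integral\<^sup>L (Pi \<Otimes>\<^sub>M Pi) gAc"
  define E where "E = imh_dirichlet M \<pi> q f"
  have NT: "2 * N \<le> 2 * (s * E) + T" using gsplit partA unfolding T_def E_def by simp
  have N_eq: "(\<integral>x. (f x)\<^sup>2 \<partial>pi_measure M \<pi>) = N" unfolding N_def Pi_def ..
  define S where "S = esssup Pi (\<lambda>x. ereal (f x))"
  define I where "I = essinf Pi (\<lambda>x. ereal (f x))"
  have osc: "osc_norm (pi_measure M \<pi>) f = S - I" unfolding osc_norm_def S_def I_def Pi_def ..
  have AE_S: "AE x in Pi. ereal (f x) \<le> S" unfolding S_def by (rule esssup_AE)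
  have AE_I: "AE x in Pi. I \<le> ereal (f x)"
  proof -
    have "AE x in Pi. - ereal (f x) \<le> esssup Pi (\<lambda>x. - ereal (f x))" by (rule esssup_AE)
    then show ?thesis unfolding I_def essinf_def by (auto simp: ereal_uminus_le_reorder)
  qed
  have S_ninf: "S \<noteq> -\<infinity>"
  proof
    assume "S = -\<infinity>"
    then have "AE x in Pi. False" using AE_S by simp
    then show False by simp
  qed
  have I_inf: "I \<noteq> \<infinity>"
  proof
    assume "I = \<infinity>"
    then have "AE x in Pi. False" using AE_I by simp
    then show False by simp
  qed
  show ?thesis
  proof (cases "\<mu> = 0")
    case True
    have "emeasure (Pi \<Otimes>\<^sub>M Pi) Ac = 0" using True unfolding \<mu>_def by (simp add: PP.emeasure_eq_measure)
    then have "Ac \<in> null_sets (Pi \<Otimes>\<^sub>M Pi)" using Ac_PP by (simp add: null_sets_def)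
    then have "AE z in Pi \<Otimes>\<^sub>M Pi. z \<notin> Ac" by (rule AE_I') auto
    then have "AE z in Pi \<Otimes>\<^sub>M Pi. gAc z = 0" by eventually_elim (simp add: gAc_def)
    then have "T = 0" unfolding T_def by (rule integral_eq_zero_AE)
    then have "N \<le> s * E" using NT by simp
    then show ?thesis unfolding N_eq mu_eq True E_def[symmetric] by (simp add: zero_ereal_def[symmetric])
  next
    case mu_ne: False
    then have mu_pos: "0 < \<mu>" using mu_nn by simp
    show ?thesis
    proof (cases "S = \<infinity> \<or> I = -\<infinity>")
      case True
      then have "S - I = \<infinity>" using S_ninf I_inf by (cases S; cases I) auto
      then show ?thesis unfolding osc mu_eq using mu_pos by simp
    next
      case False
      then obtain a b where ab: "S = ereal a" "I = ereal b" using S_ninf I_inf by (cases S; cases I) auto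
      have AEab: "AE x in Pi. b \<le> f x \<and> f x \<le> a" using AE_S AE_I unfolding ab by eventually_elim auto
      have gbound: "(u - v)\<^sup>2 \<le> (a - b)\<^sup>2" if "b \<le> u \<and> u \<le> a" "b \<le> v \<and> v \<le> a" for u v :: real
      proof -
        have "\<bar>u - v\<bar> \<le> \<bar>a - b\<bar>" using that by auto
        then show ?thesis by (simp add: abs_le_square_iff)
      qed
      have "AE x in Pi. AE y in Pi. g (x,y) \<le> (a - b)\<^sup>2"
        using AEab
      proof eventually_elim
        case (elim x)
        show ?case using AEab
        proof eventually_elim
          case (elim y)
          show ?case unfolding g_def using gbound[OF \<open>b \<le> f x \<and> f x \<le> a\<close> elim] by simp
        qed
      qed
      then have AEg: "AE z in Pi \<Otimes>\<^sub>M Pi. g z \<le> (a - b)\<^sup>2"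
        by (intro PP.AE_pair_measure) (auto)
      have "T \<le> (\<integral>z. (a - b)\<^sup>2 * indicator Ac z \<partial>(Pi \<Otimes>\<^sub>M Pi))"
        unfolding T_def
      proof (rule integral_mono_AE[OF intgAc])
        show "integrable (Pi \<Otimes>\<^sub>M Pi) (\<lambda>z. (a - b)\<^sup>2 * indicator Ac z)"
          by (rule PP.integrable_const_bound[where B="(a-b)\<^sup>2"]) (use Ac_PP in \<open>auto intro!: AE_I2 simp: indicator_def\<close>)
        show "AE z in Pi \<Otimes>\<^sub>M Pi. gAc z \<le> (a - b)\<^sup>2 * indicator Ac z"
          using AEg by eventually_elim (auto simp: gAc_def indicator_def)
      qed
      also have "\<dots> = (a - b)\<^sup>2 * \<mu>"
      proof -
        have "Ac \<inter> space (Pi \<Otimes>\<^sub>M Pi) = Ac" unfolding Ac_def spPP by auto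
        then show ?thesis unfolding \<mu>_def by simp
      qed
      finally have "N \<le> s * E + \<mu> / 2 * (a - b)\<^sup>2" using NT by (simp add: algebra_simps)
      then show ?thesis unfolding osc mu_eq N_eq E_def[symmetric] ab by simp
    qed
  qed
qed
end
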